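(* Let $n>3$ and consider the complex Poisson algebras with basis $e_1,\dots,e_n$ in which $e_i\cdot e_j=e_{i+j}$ for $2\le i+j\le n-1$, with the listed further nonzero products (up to commutativity/anticommutativity): $\mathcal{P}_{1,1}^n$: none; $\mathcal{P}_{1,2}^n$: $\{e_1,e_n\}=e_n$; $\mathcal{P}_{1,3}^n$: $\{e_1,e_n\}=e_{n-1}$; $\mathcal{P}_{1,4}^n$: $e_n\cdot e_n=e_{n-1}$; $\mathcal{P}_{1,5}^n$: $e_n\cdot e_n=e_{n-1}$, $\{e_1,e_n\}=e_{n-1}$. Let $\varphi$ be a derivation of $\mathcal{P}$. Then, for $2\le i\le n-1$: (a) if $\mathcal{P}=\mathcal{P}_{1,1}^n$: $\varphi(e_1)=\sum_{k=1}^n\lambda_{k,1}e_k$, $\varphi(e_i)=\sum_{k=i}^{n-1}i\lambda_{k-i+1,1}e_k$, $\varphi(e_n)=\lambda_{n-1,n}e_{n-1}+\lambda_{n,n}e_n$ for some $\lambda_{k,1},\lambda_{n-1,n},\lambda_{n,n}\in\mathbb{C}$, and $\dim\mathfrak{Der}(\mathcal{P}_{1,1}^n)=n+2$; (b) if $\mathcal{P}=\mathcal{P}_{1,2}^n$: $\varphi(e_1)=\sum_{k=2}^n\lambda_{k,1}e_k$, $\varphi(e_i)=\sum_{k=i+1}^{n-1}i\lambda_{k-i+1,1}e_k$, $\varphi(e_n)=\lambda_{n,n}e_n$ for some $\lambda_{k,1},\lambda_{n,n}\in\mathbb{C}$, and $\dim\mathfrak{Der}(\mathcal{P}_{1,2}^n)=n$;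 (c) if $\mathcal{P}=\mathcal{P}_{1,3}^n$: $\varphi(e_1)=\sum_{k=1}^n\lambda_{k,1}e_k$, $\varphi(e_i)=\sum_{k=i}^{n-1}i\lambda_{k-i+1,1}e_k$, $\varphi(e_n)=\lambda_{n-1,n}e_{n-1}+(n-2)\lambda_{1,1}e_n$ for some $\lambda_{k,1},\lambda_{n-1,n}\in\mathbb{C}$, and $\dim\mathfrak{Der}(\mathcal{P}_{1,3}^n)=n+1$; (d) if $\mathcal{P}=\mathcal{P}_{1,4}^n$: $\varphi(e_1)=\sum_{k=1}^n\lambda_{k,1}e_k$, $\varphi(e_i)=\sum_{k=i}^{n-1}i\lambda_{k-i+1,1}e_k$, $\varphi(e_n)=-\lambda_{n,1}e_{n-2}+\lambda_{n-1,n}e_{n-1}+\frac{n-1}{2}\lambda_{1,1}e_n$ for some $\lambda_{k,1},\lambda_{n-1,n}\in\mathbb{C}$, and $\dim\mathfrak{Der}(\mathcal{P}_{1,4}^n)=n+1$; (e) if $\mathcal{P}=\mathcal{P}_{1,5}^n$: $\varphi(e_1)=\sum_{k=2}^n\lambda_{k,1}e_k$, $\varphi(e_i)=\sum_{k=i+1}^{n-1}i\lambda_{k-i+1,1}e_k$, $\varphi(e_n)=-\lambda_{n,1}e_{n-2}+\lambda_{n-1,n}e_{n-1}$ for some $\lambda_{k,1},\lambda_{n-1,n}\in\mathbb{C}$, and $\dim\mathfrak{Der}(\mathcal{P}_{1,5}^n)=n$.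
   Context: A derivation of a Poisson algebra $(\mathcal{P},\cdot,\{-,-\})$ is a linear map $\varphi$ with $\varphi(x\cdot y)=\varphi(x)\cdot y+x\cdot\varphi(y)$ and $\varphi(\{x,y\})=\{\varphi(x),y\}+\{x,\varphi(y)\}$ for all $x,y$; $\mathfrak{Der}(\mathcal{P})$ is the Lie algebra of derivations. Indices $k$ in $\lambda_{k,1}$ range over the values appearing in the sums. *)

theory Defs
  imports Complex_Main "HOL-Library.Function_Algebras"
begin

text \<open>Elements of the n-dimensional algebra with basis e_1..e_n are coordinate
functions nat => complex supported in {1..n}.\<close>

definition V :: "nat \<Rightarrow> (nat \<Rightarrow> complex) set" where
  "V n = {x. \<forall>k. k \<notin> {1..n} \<longrightarrow> x k = 0}"

definition ebas :: "nat \<Rightarrow> nat \<Rightarrow> complex" where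
  "ebas i = (\<lambda>k. if k = i then 1 else 0)"

text \<open>Structure constants: mu n t i j k is the coefficient of e_k in e_i . e_j,
br n t i j k the coefficient of e_k in {e_i,e_j}, for the algebra P_{1,t}^n (t = 1..5).\<close>

definition mu :: "nat \<Rightarrow> nat \<Rightarrow> nat \<Rightarrow> nat \<Rightarrow> nat \<Rightarrow> complex" where
  "mu n t i j k =
     (if 1 \<le> i \<and> 1 \<le> j \<and> 2 \<le> i + j \<and> i + j \<le> n - 1 \<and> k = i + j then 1 else 0)
   + (if t \<in> {4, 5} \<and> i = n \<and> j = n \<and> k = n - 1 then 1 else 0)"

definition br :: "nat \<Rightarrow> nat \<Rightarrow> nat \<Rightarrow> nat \<Rightarrow> nat \<Rightarrow> complex" where
  "br n t i j k =
     (if t = 2 \<and> k = n then (if i = 1 \<and> j = n then 1 else if i = n \<and> j = 1 then -1 else 0)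
      else if t \<in> {3, 5} \<and> k = n - 1 then
        (if i = 1 \<and> j = n then 1 else if i = n \<and> j = 1 then -1 else 0)
      else 0)"

definition pmul :: "nat \<Rightarrow> nat \<Rightarrow> (nat \<Rightarrow> complex) \<Rightarrow> (nat \<Rightarrow> complex) \<Rightarrow> nat \<Rightarrow> complex" where
  "pmul n t x y = (\<lambda>k. \<Sum>i\<in>{1..n}. \<Sum>j\<in>{1..n}. x i * y j * mu n t i j k)"

definition pbr :: "nat \<Rightarrow> nat \<Rightarrow> (nat \<Rightarrow> complex) \<Rightarrow> (nat \<Rightarrow> complex) \<Rightarrow> nat \<Rightarrow> complex" where
  "pbr n t x y = (\<lambda>k. \<Sum>i\<in>{1..n}. \<Sum>j\<in>{1..n}. x i * y j * br n t i j k)"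

text \<open>Derivations of P_{1,t}^n: linear maps V n -> V n (extended by 0 outside V n,
so that they form a vector space of functions) satisfying both Leibniz rules.\<close>

definition is_der :: "nat \<Rightarrow> nat \<Rightarrow> ((nat \<Rightarrow> complex) \<Rightarrow> (nat \<Rightarrow> complex)) \<Rightarrow> bool" where
  "is_der n t \<phi> \<longleftrightarrow>
     (\<forall>x. x \<notin> V n \<longrightarrow> \<phi> x = 0) \<and>
     (\<forall>x\<in>V n. \<phi> x \<in> V n) \<and>
     (\<forall>x\<in>V n. \<forall>y\<in>V n. \<phi> (x + y) = \<phi> x + \<phi> y) \<and>
     (\<forall>c. \<forall>x\<in>V n. \<phi> (\<lambda>k. c * x k) = (\<lambda>k. c * \<phi> x k)) \<and>
     (\<forall>x\<in>V n. \<forall>y\<in>V n. \<phi> (pmul n t x y) = pmul n t (\<phi> x) y + pmul n t x (\<phi> y)) \<and>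
     (\<forall>x\<in>V n. \<forall>y\<in>V n. \<phi> (pbr n t x y) = pbr n t (\<phi> x) y + pbr n t x (\<phi> y))"

definition Der :: "nat \<Rightarrow> nat \<Rightarrow> ((nat \<Rightarrow> complex) \<Rightarrow> (nat \<Rightarrow> complex)) set" where
  "Der n t = {\<phi>. is_der n t \<phi>}"

definition dscale :: "complex \<Rightarrow> ((nat \<Rightarrow> complex) \<Rightarrow> (nat \<Rightarrow> complex))
                     \<Rightarrow> ((nat \<Rightarrow> complex) \<Rightarrow> (nat \<Rightarrow> complex))" where
  "dscale c \<phi> = (\<lambda>x k. c * \<phi> x k)"

lemma vector_space_dscale: "vector_space dscale"
  by unfold_locales (auto simp: dscale_def fun_eq_iff algebra_simps)

definition dimDer :: "nat \<Rightarrow> nat \<Rightarrow> nat" where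
  "dimDer n t = vector_space.dim dscale (Der n t)"

end

theory Submission
  imports Defs
begin

lemma sum_fun_app: "(\<Sum>i\<in>A. f i) x = (\<Sum>i\<in>A. f i x)"
  by (induction A rule: infinite_finite_induct) auto

lemma sum_if_conj: "finite S \<Longrightarrow> (\<Sum>k\<in>S. if P \<and> k = a then f k else 0) = (if P \<and> a \<in> S then f a else 0)"
  by (cases P) auto

lemma sum_ebas_l: "finite A \<Longrightarrow> (\<Sum>k\<in>A. ebas i k * g k) = (if i \<in> A then g i else 0)"
proof -
  assume "finite A"
  have "(\<Sum>k\<in>A. ebas i k * g k) = (\<Sum>k\<in>A. if k = i then g k else 0)" by (rule sum.cong) (auto simp: ebas_def)
  then show ?thesis using \<open>finite A\<close> by (simp add: sum.delta')
qed

lemma sum_ebas_r: "finite A \<Longrightarrow> (\<Sum>k\<in>A. g k * ebas i k) = (if i \<in> A then g i else 0)"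
  using sum_ebas_l[of A i g] by (simp add: mult.commute)

lemma ebas_sym: "ebas i k = ebas k i"
  by (simp add: ebas_def)

lemma sum_ebas_idx: "finite A \<Longrightarrow> (\<Sum>i\<in>A. g i * ebas i k) = (if k \<in> A then g k else 0)"
  by (simp add: ebas_sym[of _ k] sum_ebas_r)

definition Lm :: "nat \<Rightarrow> (nat \<Rightarrow> nat \<Rightarrow> complex) \<Rightarrow> (nat \<Rightarrow> complex) \<Rightarrow> nat \<Rightarrow> complex" where
  "Lm n M x = (if x \<in> V n then (\<lambda>j. \<Sum>i\<in>{1..n}. x i * M i j) else (\<lambda>j. 0))"

definition genP :: "nat \<Rightarrow> (nat \<Rightarrow> nat \<Rightarrow> nat \<Rightarrow> complex) \<Rightarrow> (nat \<Rightarrow> complex) \<Rightarrow> (nat \<Rightarrow> complex) \<Rightarrow> nat \<Rightarrow> complex" where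
  "genP n c x y = (\<lambda>k. \<Sum>i\<in>{1..n}. \<Sum>j\<in>{1..n}. x i * y j * c i j k)"

lemma pmul_genP: "pmul n t = genP n (mu n t)"
  by (simp add: fun_eq_iff pmul_def genP_def)
lemma pbr_genP: "pbr n t = genP n (br n t)"
  by (simp add: fun_eq_iff pbr_def genP_def)

lemma ebas_V: "i \<in> {1..n} \<Longrightarrow> ebas i \<in> V n"
  by (auto simp: V_def ebas_def)
lemma ebas_notV: "i \<notin> {1..n} \<Longrightarrow> ebas i \<notin> V n"
  by (auto simp: V_def ebas_def)

lemma genP_ebas: "i \<in> {1..n} \<Longrightarrow> l \<in> {1..n} \<Longrightarrow> genP n c (ebas i) (ebas l) = (\<lambda>k. c i l k)"
  by (simp add: genP_def sum_ebas_l sum_ebas_r mult.assoc sum_distrib_left[symmetric])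

lemma genP_ebas_r: "l \<in> {1..n} \<Longrightarrow> genP n c x (ebas l) = (\<lambda>k. \<Sum>a\<in>{1..n}. x a * c a l k)"
  unfolding genP_def
  apply (rule ext, rule sum.cong, simp)
  apply (simp add: mult.assoc mult.left_commute[of "ebas l _"] sum_distrib_left[symmetric] sum_ebas_l)
  done

lemma genP_ebas_l: "i \<in> {1..n} \<Longrightarrow> genP n c (ebas i) y = (\<lambda>k. \<Sum>b\<in>{1..n}. y b * c i b k)"
  unfolding genP_def
  by (simp add: mult.assoc sum_ebas_l sum_distrib_left[symmetric])

lemma Lm_ebas: "i \<in> {1..n} \<Longrightarrow> Lm n M (ebas i) = M i"
  by (simp add: Lm_def ebas_V sum_ebas_l fun_eq_iff)

lemma lin_sum:
  assumes add: "\<forall>x\<in>V n. \<forall>y\<in>V n. \<phi> (x + y) = \<phi> x + \<phi> y"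
    and hom: "\<forall>c. \<forall>x\<in>V n. \<phi> (\<lambda>k. c * x k) = (\<lambda>k. c * \<phi> x k)"
    and n: "n \<ge> 1"
    and A: "A \<subseteq> {1..n}"
  shows "\<phi> (\<lambda>k. \<Sum>i\<in>A. x i * ebas i k) = (\<lambda>j. \<Sum>i\<in>A. x i * \<phi> (ebas i) j)"
proof -
  have fin: "finite A" using A finite_subset by blast
  show ?thesis using fin A
  proof (induction A rule: finite_induct)
    case empty
    have e1: "ebas 1 \<in> V n" using ebas_V[of 1 n] n by simp
    have "\<phi> (\<lambda>k. 0 * ebas 1 k) = (\<lambda>k. 0 * \<phi> (ebas 1) k)"
      by (rule hom[rule_format, OF e1])
    then show ?case by simp
  next
    case (insert a A)
    have V1: "(\<lambda>k. x a * ebas a k) \<in> V n" using insert by (auto simp: V_def ebas_def)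
    have V2: "(\<lambda>k. \<Sum>i\<in>A. x i * ebas i k) \<in> V n" using insert by (auto simp: V_def sum_ebas_idx)
    have "(\<lambda>k. \<Sum>i\<in>insert a A. x i * ebas i k) = (\<lambda>k. x a * ebas a k) + (\<lambda>k. \<Sum>i\<in>A. x i * ebas i k)"
      using insert by (simp add: fun_eq_iff)
    then have "\<phi> (\<lambda>k. \<Sum>i\<in>insert a A. x i * ebas i k) = \<phi> (\<lambda>k. x a * ebas a k) + \<phi> (\<lambda>k. \<Sum>i\<in>A. x i * ebas i k)"
      using add V1 V2 by simp
    also have "\<phi> (\<lambda>k. x a * ebas a k) = (\<lambda>k. x a * \<phi> (ebas a) k)"
      using hom ebas_V[of a n] insert by auto
    finally show ?case using insert by (simp add: fun_eq_iff)
  qed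
qed

lemma V_expand: "x \<in> V n \<Longrightarrow> x = (\<lambda>k. \<Sum>i\<in>{1..n}. x i * ebas i k)"
proof
  fix k assume "x \<in> V n"
  have "(\<Sum>i\<in>{1..n}. x i * ebas i k) = (if k \<in> {1..n} then x k else 0)" by (rule sum_ebas_idx) simp
  then show "x k = (\<Sum>i\<in>{1..n}. x i * ebas i k)" using \<open>x \<in> V n\<close> by (auto simp: V_def)
qed

lemma der_repr:
  assumes "is_der n t \<phi>" "n \<ge> 1"
  shows "\<phi> = Lm n (\<lambda>i j. \<phi> (ebas i) j)"
proof
  fix x
  show "\<phi> x = Lm n (\<lambda>i j. \<phi> (ebas i) j) x"
  proof (cases "x \<in> V n")
    case True
    have "\<phi> x = \<phi> (\<lambda>k. \<Sum>i\<in>{1..n}. x i * ebas i k)" using V_expand[OF True] by simp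
    also have "\<dots> = (\<lambda>j. \<Sum>i\<in>{1..n}. x i * \<phi> (ebas i) j)"
    proof (rule lin_sum)
      show "\<forall>x\<in>V n. \<forall>y\<in>V n. \<phi> (x + y) = \<phi> x + \<phi> y" using assms(1) unfolding is_der_def by blast
      show "\<forall>c. \<forall>x\<in>V n. \<phi> (\<lambda>k. c * x k) = (\<lambda>k. c * \<phi> x k)" using assms(1) unfolding is_der_def by blast
    qed (use assms in auto)
    finally show ?thesis using True by (simp add: Lm_def)
  next
    case False
    then show ?thesis using assms by (simp add: Lm_def is_der_def zero_fun_def)
  qed
qed

lemma lin_repr:
  assumes add: "\<forall>x\<in>V n. \<forall>y\<in>V n. \<phi> (x + y) = \<phi> x + \<phi> y"
    and hom: "\<forall>c. \<forall>x\<in>V n. \<phi> (\<lambda>k. c * x k) = (\<lambda>k. c * \<phi> x k)"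
    and n: "n \<ge> 1" and x: "x \<in> V n"
  shows "\<phi> x = (\<lambda>j. \<Sum>i\<in>{1..n}. x i * \<phi> (ebas i) j)"
  using lin_sum[OF add hom n, of "{1..n}" x] V_expand[OF x] by simp

lemma der_basis:
  assumes add: "\<forall>x\<in>V n. \<forall>y\<in>V n. \<phi> (x + y) = \<phi> x + \<phi> y"
    and hom: "\<forall>c. \<forall>x\<in>V n. \<phi> (\<lambda>k. c * x k) = (\<lambda>k. c * \<phi> x k)"
    and n: "n \<ge> 1"
    and leib: "\<forall>x\<in>V n. \<forall>y\<in>V n. \<phi> (genP n c x y) = genP n c (\<phi> x) y + genP n c x (\<phi> y)"
    and cV: "\<forall>i l k. i \<in> {1..n} \<longrightarrow> l \<in> {1..n} \<longrightarrow> k \<notin> {1..n} \<longrightarrow> c i l k = 0"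
    and i: "i \<in> {1..n}" and l: "l \<in> {1..n}"
  shows "(\<Sum>k\<in>{1..n}. c i l k * \<phi> (ebas k) j) =
         (\<Sum>a\<in>{1..n}. \<phi> (ebas i) a * c a l j) + (\<Sum>b\<in>{1..n}. \<phi> (ebas l) b * c i b j)"
proof -
  have cv: "(\<lambda>k. c i l k) \<in> V n" using cV i l by (auto simp: V_def)
  have "\<phi> (genP n c (ebas i) (ebas l)) = genP n c (\<phi> (ebas i)) (ebas l) + genP n c (ebas i) (\<phi> (ebas l))"
    using leib ebas_V[OF i] ebas_V[OF l] by blast
  then have "\<phi> (\<lambda>k. c i l k) = (\<lambda>k. \<Sum>a\<in>{1..n}. \<phi> (ebas i) a * c a l k) + (\<lambda>k. \<Sum>b\<in>{1..n}. \<phi> (ebas l) b * c i b k)"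
    by (subst (asm) genP_ebas[OF i l], simp only: genP_ebas_r[OF l] genP_ebas_l[OF i])
  then have "\<phi> (\<lambda>k. c i l k) j = (\<Sum>a\<in>{1..n}. \<phi> (ebas i) a * c a l j) + (\<Sum>b\<in>{1..n}. \<phi> (ebas l) b * c i b j)"
    by simp
  moreover have "\<phi> (\<lambda>k. c i l k) j = (\<Sum>k\<in>{1..n}. c i l k * \<phi> (ebas k) j)"
    using lin_repr[OF add hom n cv] by simp
  ultimately show ?thesis by simp
qed

lemma rot3: "(\<Sum>a\<in>A. \<Sum>b\<in>B. \<Sum>c\<in>C. f a b c) = (\<Sum>b\<in>B. \<Sum>c\<in>C. \<Sum>a\<in>A. f a b c)"
  by (rule trans[OF sum.swap], rule sum.cong, rule refl, rule sum.swap)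

lemma rev3: "(\<Sum>a\<in>A. \<Sum>b\<in>B. \<Sum>c\<in>C. f a b c) = (\<Sum>c\<in>C. \<Sum>b\<in>B. \<Sum>a\<in>A. f a b c)"
  apply (rule trans[OF sum.swap])
  apply (rule trans[OF sum.cong[OF refl sum.swap]])
  apply (rule sum.swap)
  done

lemma Lm_leib:
  assumes cV: "\<And>x y. genP n c x y \<in> V n"
    and E: "\<forall>i\<in>{1..n}. \<forall>l\<in>{1..n}. \<forall>j. (\<Sum>k\<in>{1..n}. c i l k * M k j) =
         (\<Sum>a\<in>{1..n}. M i a * c a l j) + (\<Sum>b\<in>{1..n}. M l b * c i b j)"
    and x: "x \<in> V n" and y: "y \<in> V n"
  shows "Lm n M (genP n c x y) = genP n c (Lm n M x) y + genP n c x (Lm n M y)"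
proof
  fix j
  have "Lm n M (genP n c x y) j = (\<Sum>k\<in>{1..n}. \<Sum>i\<in>{1..n}. \<Sum>l\<in>{1..n}. x i * y l * c i l k * M k j)"
    using cV by (simp add: Lm_def genP_def sum_distrib_right)
  also have "\<dots> = (\<Sum>i\<in>{1..n}. \<Sum>l\<in>{1..n}. \<Sum>k\<in>{1..n}. x i * y l * c i l k * M k j)"
    by (rule rot3)
  also have "\<dots> = (\<Sum>i\<in>{1..n}. \<Sum>l\<in>{1..n}. x i * y l * (\<Sum>k\<in>{1..n}. c i l k * M k j))"
    by (simp add: sum_distrib_left mult.assoc)
  also have "\<dots> = (\<Sum>i\<in>{1..n}. \<Sum>l\<in>{1..n}. x i * y l * (\<Sum>a\<in>{1..n}. M i a * c a l j))
       + (\<Sum>i\<in>{1..n}. \<Sum>l\<in>{1..n}. x i * y l * (\<Sum>b\<in>{1..n}. M l b * c i b j))"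
    using E by (simp add: sum.distrib distrib_left)
  also have "(\<Sum>i\<in>{1..n}. \<Sum>l\<in>{1..n}. x i * y l * (\<Sum>a\<in>{1..n}. M i a * c a l j))
      = genP n c (Lm n M x) y j"
  proof -
    have "genP n c (Lm n M x) y j = (\<Sum>a\<in>{1..n}. \<Sum>l\<in>{1..n}. \<Sum>i\<in>{1..n}. x i * y l * (M i a * c a l j))"
      using x by (simp add: Lm_def genP_def sum_distrib_right sum_distrib_left mult_ac)
    also have "\<dots> = (\<Sum>i\<in>{1..n}. \<Sum>l\<in>{1..n}. \<Sum>a\<in>{1..n}. x i * y l * (M i a * c a l j))"
      by (rule rev3)
    finally show ?thesis by (simp add: sum_distrib_left)
  qed
  also have "(\<Sum>i\<in>{1..n}. \<Sum>l\<in>{1..n}. x i * y l * (\<Sum>b\<in>{1..n}. M l b * c i b j))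
      = genP n c x (Lm n M y) j"
  proof -
    have "genP n c x (Lm n M y) j = (\<Sum>i\<in>{1..n}. \<Sum>b\<in>{1..n}. \<Sum>l\<in>{1..n}. x i * y l * (M l b * c i b j))"
      using y by (simp add: Lm_def genP_def sum_distrib_right sum_distrib_left mult_ac)
    also have "\<dots> = (\<Sum>i\<in>{1..n}. \<Sum>l\<in>{1..n}. \<Sum>b\<in>{1..n}. x i * y l * (M l b * c i b j))"
      by (rule sum.cong[OF refl sum.swap])
    finally show ?thesis by (simp add: sum_distrib_left)
  qed
  finally show "Lm n M (genP n c x y) j = (genP n c (Lm n M x) y + genP n c x (Lm n M y)) j"
    by simp
qed

lemma if10: "(if P then 1 else 0) * (f::complex) = (if P then f else 0)" by simp

lemma mu_left:
  assumes n: "n > 3" and i: "i \<in> {1..n}" and l: "l \<in> {1..n}"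
  shows "(\<Sum>k\<in>{1..n}. mu n t i l k * M k j) =
    (if i + l \<le> n - 1 then M (i+l) j else 0) + (if t \<in> {4,5} \<and> i = n \<and> l = n then M (n-1) j else 0)"
proof -
  have "(\<Sum>k\<in>{1..n}. mu n t i l k * M k j) =
     (\<Sum>k\<in>{1..n}. if (1 \<le> i \<and> 1 \<le> l \<and> 2 \<le> i + l \<and> i + l \<le> n - 1) \<and> k = i + l then M k j else 0)
   + (\<Sum>k\<in>{1..n}. if (t \<in> {4, 5} \<and> i = n \<and> l = n) \<and> k = n - 1 then M k j else 0)"
    by (simp add: mu_def distrib_right sum.distrib if10 del: insert_iff)
  also have "\<dots> = (if i + l \<le> n - 1 then M (i+l) j else 0) + (if t \<in> {4,5} \<and> i = n \<and> l = n then M (n-1) j else 0)"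
    apply (simp only: sum_if_conj[OF finite_atLeastAtMost])
    using n i l by auto
  finally show ?thesis .
qed

lemma mu_right1:
  assumes n: "n > 3" and l: "l \<in> {1..n}"
  shows "(\<Sum>a\<in>{1..n}. M a * mu n t a l j) =
    (if l < j \<and> j \<le> n - 1 then M (j - l) else 0) + (if t \<in> {4,5} \<and> l = n \<and> j = n - 1 then M n else 0)"
proof -
  have "(\<Sum>a\<in>{1..n}. M a * mu n t a l j) =
     (\<Sum>a\<in>{1..n}. if (1 \<le> l \<and> l < j \<and> j \<le> n - 1) \<and> a = j - l then M a else 0)
   + (\<Sum>a\<in>{1..n}. if (t \<in> {4, 5} \<and> l = n \<and> j = n - 1) \<and> a = n then M a else 0)"
    unfolding mu_def distrib_left sum.distrib
    apply (rule arg_cong2[where f="(+)"]; rule sum.cong; simp)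
    using l by auto
  also have "\<dots> = (if l < j \<and> j \<le> n - 1 then M (j - l) else 0) + (if t \<in> {4,5} \<and> l = n \<and> j = n - 1 then M n else 0)"
    apply (simp only: sum_if_conj[OF finite_atLeastAtMost])
    using n l by auto
  finally show ?thesis .
qed

lemma mu_right2:
  assumes n: "n > 3" and i: "i \<in> {1..n}"
  shows "(\<Sum>b\<in>{1..n}. M b * mu n t i b j) =
    (if i < j \<and> j \<le> n - 1 then M (j - i) else 0) + (if t \<in> {4,5} \<and> i = n \<and> j = n - 1 then M n else 0)"
proof -
  have "(\<Sum>b\<in>{1..n}. M b * mu n t i b j) =
     (\<Sum>b\<in>{1..n}. if (1 \<le> i \<and> i < j \<and> j \<le> n - 1) \<and> b = j - i then M b else 0)
   + (\<Sum>b\<in>{1..n}. if (t \<in> {4, 5} \<and> i = n \<and> j = n - 1) \<and> b = n then M b else 0)"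
    unfolding mu_def distrib_left sum.distrib
    apply (rule arg_cong2[where f="(+)"]; rule sum.cong; simp)
    using i by auto
  also have "\<dots> = (if i < j \<and> j \<le> n - 1 then M (j - i) else 0) + (if t \<in> {4,5} \<and> i = n \<and> j = n - 1 then M n else 0)"
    apply (simp only: sum_if_conj[OF finite_atLeastAtMost])
    using n i by auto
  finally show ?thesis .
qed

definition btg :: "nat \<Rightarrow> nat \<Rightarrow> nat" where "btg n t = (if t = 2 then n else n - 1)"

lemma br_alt: "n > 3 \<Longrightarrow> br n t i l k =
   (if t \<in> {2,3,5} \<and> k = btg n t then (if i = 1 \<and> l = n then 1 else if i = n \<and> l = 1 then -1 else 0) else 0)"
  by (auto simp: br_def btg_def)

lemma br_left:
  assumes n: "n > 3"
  shows "(\<Sum>k\<in>{1..n}. br n t i l k * M k j) =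
    (if t \<in> {2,3,5} then (if i = 1 \<and> l = n then M (btg n t) j else if i = n \<and> l = 1 then - M (btg n t) j else 0) else 0)"
proof -
  have "(\<Sum>k\<in>{1..n}. br n t i l k * M k j) =
     (\<Sum>k\<in>{1..n}. if t \<in> {2,3,5} \<and> k = btg n t then (if i = 1 \<and> l = n then 1 else if i = n \<and> l = 1 then -1 else 0) * M k j else 0)"
    by (rule sum.cong) (auto simp: br_alt[OF n])
  also have "\<dots> = (if t \<in> {2,3,5} then (if i = 1 \<and> l = n then M (btg n t) j else if i = n \<and> l = 1 then - M (btg n t) j else 0) else 0)"
    apply (simp only: sum_if_conj[OF finite_atLeastAtMost])
    using n by (auto simp: btg_def)
  finally show ?thesis .
qed

lemma br_right1:
  assumes n: "n > 3"
  shows "(\<Sum>a\<in>{1..n}. M a * br n t a l j) =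
    (if t \<in> {2,3,5} \<and> j = btg n t then (if l = n then M 1 else if l = 1 then - M n else 0) else 0)"
proof (cases "t \<in> {2,3,5} \<and> j = btg n t")
  case True
  have "(\<Sum>a\<in>{1..n}. M a * br n t a l j) =
     (\<Sum>a\<in>{1..n}. (if l = n \<and> a = 1 then M a else 0) + (if l = 1 \<and> a = n then - M a else 0))"
    by (rule sum.cong) (use n True in \<open>auto simp: br_alt[OF n]\<close>)
  also have "\<dots> = (if l = n then M 1 else if l = 1 then - M n else 0)"
    apply (simp only: sum.distrib sum_if_conj[OF finite_atLeastAtMost])
    using n by auto
  finally show ?thesis using True by simp
next
  case False
  then show ?thesis by (auto simp: br_alt[OF n])
qed

lemma br_right2:
  assumes n: "n > 3"
  shows "(\<Sum>b\<in>{1..n}. M b * br n t i b j) =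
    (if t \<in> {2,3,5} \<and> j = btg n t then (if i = 1 then M n else if i = n then - M 1 else 0) else 0)"
proof (cases "t \<in> {2,3,5} \<and> j = btg n t")
  case True
  have "(\<Sum>b\<in>{1..n}. M b * br n t i b j) =
     (\<Sum>b\<in>{1..n}. (if i = 1 \<and> b = n then M b else 0) + (if i = n \<and> b = 1 then - M b else 0))"
    by (rule sum.cong) (use n True in \<open>auto simp: br_alt[OF n]\<close>)
  also have "\<dots> = (if i = 1 then M n else if i = n then - M 1 else 0)"
    apply (simp only: sum.distrib sum_if_conj[OF finite_atLeastAtMost])
    using n by auto
  finally show ?thesis using True by simp
next
  case False
  then show ?thesis by (auto simp: br_alt[OF n])
qed

definition Emu :: "nat \<Rightarrow> nat \<Rightarrow> (nat \<Rightarrow> nat \<Rightarrow> complex) \<Rightarrow> bool" where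
  "Emu n t M \<longleftrightarrow> (\<forall>i\<in>{1..n}. \<forall>l\<in>{1..n}. \<forall>j.
     (if i + l \<le> n - 1 then M (i+l) j else 0) + (if t \<in> {4,5} \<and> i = n \<and> l = n then M (n-1) j else 0) =
     ((if l < j \<and> j \<le> n - 1 then M i (j - l) else 0) + (if t \<in> {4,5} \<and> l = n \<and> j = n - 1 then M i n else 0))
   + ((if i < j \<and> j \<le> n - 1 then M l (j - i) else 0) + (if t \<in> {4,5} \<and> i = n \<and> j = n - 1 then M l n else 0)))"

definition Ebr :: "nat \<Rightarrow> nat \<Rightarrow> (nat \<Rightarrow> nat \<Rightarrow> complex) \<Rightarrow> bool" where
  "Ebr n t M \<longleftrightarrow> (\<forall>i\<in>{1..n}. \<forall>l\<in>{1..n}. \<forall>j.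
     (if t \<in> {2,3,5} then (if i = 1 \<and> l = n then M (btg n t) j else if i = n \<and> l = 1 then - M (btg n t) j else 0) else 0) =
     (if t \<in> {2,3,5} \<and> j = btg n t then (if l = n then M i 1 else if l = 1 then - M i n else 0) else 0)
   + (if t \<in> {2,3,5} \<and> j = btg n t then (if i = 1 then M l n else if i = n then - M l 1 else 0) else 0))"

lemma Emu_iff: assumes n: "n > 3" shows " Emu n t M \<longleftrightarrow> (\<forall>i\<in>{1..n}. \<forall>l\<in>{1..n}. \<forall>j.
   (\<Sum>k\<in>{1..n}. mu n t i l k * M k j) = (\<Sum>a\<in>{1..n}. M i a * mu n t a l j) + (\<Sum>b\<in>{1..n}. M l b * mu n t i b j))"
proof -
  have key: "(\<Sum>k\<in>{1..n}. mu n t i l k * M k j) = (\<Sum>a\<in>{1..n}. M i a * mu n t a l j) + (\<Sum>b\<in>{1..n}. M l b * mu n t i b j)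
     \<longleftrightarrow> (if i + l \<le> n - 1 then M (i+l) j else 0) + (if t \<in> {4,5} \<and> i = n \<and> l = n then M (n-1) j else 0) =
     ((if l < j \<and> j \<le> n - 1 then M i (j - l) else 0) + (if t \<in> {4,5} \<and> l = n \<and> j = n - 1 then M i n else 0))
   + ((if i < j \<and> j \<le> n - 1 then M l (j - i) else 0) + (if t \<in> {4,5} \<and> i = n \<and> j = n - 1 then M l n else 0))"
    if i: "i \<in> {1..n}" and l: "l \<in> {1..n}" for i l j
    by (subst mu_left[OF n i l], subst mu_right1[OF n l], subst mu_right2[OF n i], rule refl)
  show ?thesis unfolding Emu_def using key by auto
qed

lemma Ebr_iff: assumes n: "n > 3" shows " Ebr n t M \<longleftrightarrow> (\<forall>i\<in>{1..n}. \<forall>l\<in>{1..n}. \<forall>j.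
   (\<Sum>k\<in>{1..n}. br n t i l k * M k j) = (\<Sum>a\<in>{1..n}. M i a * br n t a l j) + (\<Sum>b\<in>{1..n}. M l b * br n t i b j))"
  unfolding Ebr_def
  by (simp only: br_left[OF n] br_right1[OF n, of "M _"] br_right2[OF n, of "M _"])

definition Nr :: "nat \<Rightarrow> nat \<Rightarrow> (nat \<Rightarrow> complex) \<Rightarrow> nat \<Rightarrow> complex" where
  "Nr n t p j =
      (if t = 1 then (if j = n - 1 then p (n+1) else if j = n then p (n+2) else 0)
       else if t = 2 then (if j = n then p (n+2) else 0)
       else if t = 3 then (if j = n - 1 then p (n+1) else if j = n then of_nat (n - 2) * p 1 else 0)
       else if t = 4 then (if j = n - 2 then - p n else if j = n - 1 then p (n+1)
                           else if j = n then (of_nat n - 1) / 2 * p 1 else 0)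
       else (if j = n - 2 then - p n else if j = n - 1 then p (n+1) else 0))"

definition Mt :: "nat \<Rightarrow> nat \<Rightarrow> (nat \<Rightarrow> complex) \<Rightarrow> nat \<Rightarrow> nat \<Rightarrow> complex" where
  "Mt n t p i j = (if i = 1 then (if 1 \<le> j \<and> j \<le> n then p j else 0)
    else if 2 \<le> i \<and> i \<le> n - 1 then (if i \<le> j \<and> j \<le> n - 1 then of_nat i * p (j - i + 1) else 0)
    else if i = n then Nr n t p j
    else 0)"

lemma Mt_1: "Mt n t p 1 j = (if 1 \<le> j \<and> j \<le> n then p j else 0)"
  by (simp add: Mt_def)
lemma Mt_1': "Mt n t p (Suc 0) j = (if 1 \<le> j \<and> j \<le> n then p j else 0)"
  by (simp add: Mt_def)
lemma Mt_mid: "2 \<le> i \<Longrightarrow> i \<le> n - 1 \<Longrightarrow> Mt n t p i j = (if i \<le> j \<and> j \<le> n - 1 then of_nat i * p (j - i + 1) else 0)"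
  by (simp add: Mt_def)
lemma Mt_n: assumes "n > 3" shows "Mt n t p n j = Nr n t p j"
proof -
  have "n \<noteq> 1" "\<not> n \<le> n - Suc 0" using assms by auto
  then show ?thesis by (simp add: Mt_def)
qed
lemma Mt_out: assumes "i \<notin> {1..n}" "n > 3" shows "Mt n t p i j = 0"
proof -
  have "i \<noteq> 1" "\<not> (2 \<le> i \<and> i \<le> n - 1)" "i \<noteq> n" using assms by auto
  then show ?thesis unfolding Mt_def by presburger
qed

lemma Nr_low: assumes "n > 3" "1 \<le> m" "m \<le> n - 2" "t \<in> {1..5}"
  shows "Nr n t p m = (if t \<in> {4,5} \<and> m = n - 2 then - p n else 0)"
proof -
  have "m \<noteq> n - 1" "m \<noteq> n" "t = 1 \<or> t = 2 \<or> t = 3 \<or> t = 4 \<or> t = 5" using assms by auto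
  then show ?thesis unfolding Nr_def by auto
qed

lemma Nr_n1: assumes "n > 3" shows "Nr n t p (n - 1) = (if t = 2 then 0 else p (n+1))"
proof -
  have "n - 1 \<noteq> n" "n - 1 \<noteq> n - 2" using assms by auto
  then show ?thesis unfolding Nr_def by auto
qed

lemma Nr_nn: assumes "n > 3" shows "Nr n t p n = (if t = 1 \<or> t = 2 then p (n+2) else if t = 3 then of_nat (n - 2) * p 1
    else if t = 4 then (of_nat n - 1) / 2 * p 1 else 0)"
proof -
  have "n \<noteq> n - 1" "n \<noteq> n - 2" using assms by auto
  then show ?thesis unfolding Nr_def by auto
qed

lemma Nr_out: assumes "n > 3" "m \<notin> {1..n}" shows "Nr n t p m = 0"
proof -
  have "m \<noteq> n - 1" "m \<noteq> n" "m \<noteq> n - 2" using assms by auto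
  then show ?thesis unfolding Nr_def by auto
qed

definition Sset :: "nat \<Rightarrow> nat \<Rightarrow> nat set" where
  "Sset n t = (if t = 1 then {1..n+2} else if t = 2 then {2..n} \<union> {n+2}
      else if t \<in> {3,4} then {1..n+1} else {2..n+1})"

definition evM :: "nat \<Rightarrow> (nat \<Rightarrow> nat \<Rightarrow> complex) \<Rightarrow> nat \<Rightarrow> complex" where
  "evM n M m = (if m \<le> n then M 1 m else if m = n + 1 then M n (n - 1) else M n n)"

definition pp :: "nat \<Rightarrow> nat \<Rightarrow> (nat \<Rightarrow> nat \<Rightarrow> complex) \<Rightarrow> nat \<Rightarrow> complex" where
  "pp n t M m = (if m \<in> Sset n t then evM n M m else 0)"

lemma rec_row:
  assumes n: "n > 3" and E: "Emu n t M" and i: "2 \<le> i" "i \<le> n - 1"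
  shows "M i j = (if i - 1 < j \<and> j \<le> n - 1 then M 1 (j - (i - 1)) else 0)
               + (if 1 < j \<and> j \<le> n - 1 then M (i - 1) (j - 1) else 0)"
proof -
  have "1 \<in> {1..n}" "i - 1 \<in> {1..n}" using n i by auto
  moreover have "\<not> (i - 1 = n)" "\<not> (i - Suc 0 = n)" using i n by auto
  ultimately show ?thesis using E[unfolded Emu_def, rule_format, OF \<open>1 \<in> {1..n}\<close> \<open>i - 1 \<in> {1..n}\<close>, of j] n i by simp
qed

lemma row_form:
  assumes n: "n > 3" and E: "Emu n t M"
  shows "2 \<le> i \<Longrightarrow> i \<le> n - 1 \<Longrightarrow> M i j = (if i \<le> j \<and> j \<le> n - 1 then of_nat i * M 1 (j - i + 1) else 0)"
proof (induction i arbitrary: j rule: nat_induct_at_least)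
  case base
  have e: "1 < j \<Longrightarrow> Suc (j - 2) = j - Suc 0" by arith
  then show ?case using rec_row[OF n E, of 2 j] n by auto
next
  case (Suc k)
  have r: "M (Suc k) j = (if k < j \<and> j \<le> n - 1 then M 1 (j - k) else 0)
               + (if 1 < j \<and> j \<le> n - 1 then M k (j - 1) else 0)"
    using rec_row[OF n E, of "Suc k" j] Suc.prems Suc.hyps by simp
  have ih: "M k (j - 1) = (if k \<le> j - 1 \<and> j - 1 \<le> n - 1 then of_nat k * M 1 (j - 1 - k + 1) else 0)"
    using Suc.IH Suc.prems by simp
  show ?case
  proof (cases "Suc k \<le> j \<and> j \<le> n - 1")
    case True
    obtain m where j: "j = Suc k + m" using True le_Suc_ex by blast
    show ?thesis using True r ih Suc.hyps by (simp add: j algebra_simps)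
  next
    case False
    then show ?thesis using r ih by auto
  qed
qed

lemma matA:
  assumes n: "n > 3" and t: "t \<in> {1..5}"
    and Zc: "\<forall>i j. j \<notin> {1..n} \<longrightarrow> M i j = 0"
    and Zr: "\<forall>i j. i \<notin> {1..n} \<longrightarrow> M i j = 0"
    and E: "Emu n t M" and B: "Ebr n t M"
  shows "M i j = Mt n t (pp n t M) i j"
proof -
  have n1: "1 \<in> {1..n}" "n \<in> {1..n}" using n by auto
  have F1: "M n m = (if t \<in> {4,5} \<and> m = n - 2 then - M 1 n else 0)" if m: "1 \<le> m" "m \<le> n - 2" for m
  proof -
    have "(if 1 + n \<le> n - 1 then M (1+n) (m+1) else 0) + (if t \<in> {4,5} \<and> 1 = n \<and> n = n then M (n-1) (m+1) else 0) =
     ((if n < m+1 \<and> m+1 \<le> n - 1 then M 1 (m+1 - n) else 0) + (if t \<in> {4,5} \<and> n = n \<and> m+1 = n - 1 then M 1 n else 0))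
   + ((if 1 < m+1 \<and> m+1 \<le> n - 1 then M n (m+1 - 1) else 0) + (if t \<in> {4,5} \<and> 1 = n \<and> m+1 = n - 1 then M n n else 0))"
      using E[unfolded Emu_def, rule_format, OF n1, of "m+1"] .
    then show ?thesis using m n by (auto split: if_splits simp: eq_neg_iff_add_eq_0 add.commute)
  qed
  have F2: "M (n-1) (n-1) = 2 * M n n" if "t \<in> {4,5}"
  proof -
    have "(if n + n \<le> n - 1 then M (n+n) (n-1) else 0) + (if t \<in> {4,5} \<and> n = n \<and> n = n then M (n-1) (n-1) else 0) =
     ((if n < n-1 \<and> n-1 \<le> n - 1 then M n (n-1 - n) else 0) + (if t \<in> {4,5} \<and> n = n \<and> n-1 = n - 1 then M n n else 0))
   + ((if n < n-1 \<and> n-1 \<le> n - 1 then M n (n-1 - n) else 0) + (if t \<in> {4,5} \<and> n = n \<and> n-1 = n - 1 then M n n else 0))"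
      using E[unfolded Emu_def, rule_format, OF n1(2) n1(2), of "n-1"] .
    moreover have "\<not> (n + n \<le> n - Suc 0)" "\<not> (n < n - Suc 0)" using n by auto
    ultimately show ?thesis using that n by simp
  qed
  have F3: "M (btg n t) j = (if j = btg n t then M 1 1 + M n n else 0)" if "t \<in> {2,3,5}" for j
    using B[unfolded Ebr_def, rule_format, OF n1, of j] that n by (auto simp: btg_def)
  have R: "M (n-1) (n-1) = of_nat (n-1) * M 1 1"
    using row_form[OF n E, of "n-1" "n-1"] n by simp
  have M11: "M 1 1 = 0" if "t \<in> {2,5}"
  proof (cases "t = 2")
    case True
    then show ?thesis using F3[of n] by (simp add: btg_def)
  next
    case False
    then have t5: "t = 5" using that by simp
    have h1: "M (n-1) (n-1) = M 1 1 + M n n" using F3[of "n-1"] t5 by (simp add: btg_def)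
    have h2: "M (n-1) (n-1) = 2 * M n n" using F2 t5 by simp
    have c: "of_nat (n-1) = (of_nat n - 1 :: complex)" using n by (simp add: of_nat_diff)
    have "(of_nat n - 3) * M 1 1 = 0" using h1 h2 R c by algebra
    moreover have "(of_nat n - 3 :: complex) \<noteq> 0"
    proof
      assume "(of_nat n - 3 :: complex) = 0"
      then have "(of_nat n :: complex) = of_nat 3" by simp
      then have "n = 3" using of_nat_eq_iff by blast
      then show False using n by simp
    qed
    ultimately show ?thesis by simp
  qed
  have ppM: "pp n t M m = M 1 m" if "m \<in> {1..n}" for m
  proof (cases "m \<in> Sset n t")
    case True
    then show ?thesis using that by (simp add: pp_def evM_def)
  next
    case False
    then have "m = 1" "t \<in> {2,5}" using that t by (auto simp: Sset_def split: if_splits)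
    then show ?thesis using M11 False by (simp add: pp_def)
  qed
  show ?thesis
  proof (cases "i = 1")
    case True
    then show ?thesis using ppM Zc by (auto simp: Mt_def Nr_def)
  next
    case i1: False
    show ?thesis
    proof (cases "2 \<le> i \<and> i \<le> n - 1")
      case True
      have "M i j = (if i \<le> j \<and> j \<le> n - 1 then of_nat i * M 1 (j - i + 1) else 0)"
        using row_form[OF n E] True by simp
      then show ?thesis using True i1 ppM[of "j - i + 1"] n by (auto simp: Mt_def Nr_def)
    next
      case i2: False
      show ?thesis
      proof (cases "i = n")
        case False
        then have "i \<notin> {1..n}" using i1 i2 by auto
        then show ?thesis using Zr i1 i2 False by (auto simp: Mt_def Nr_def)
      next
        case iN: True
        have base: "Mt n t (pp n t M) i j = Mt n t (pp n t M) n j" using iN by simp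
        have nn: "n \<noteq> 1" "\<not> (2 \<le> n \<and> n \<le> n - 1)" "\<not> n \<le> n - Suc 0" using n by auto
        show ?thesis
        proof (cases "j \<in> {1..n-2}")
          case True
          then have "j \<noteq> n - 1" "j \<noteq> n" using n by auto
          moreover have "pp n t M n = M 1 n" using ppM n by simp
          ultimately show ?thesis using F1[of j] True iN nn t by (auto simp: Mt_def Nr_def)
        next
          case jF: False
          show ?thesis
          proof (cases "j \<in> {1..n}")
            case False
            then have "j \<noteq> n - 1" "j \<noteq> n" "j \<noteq> n - 2" using n by auto
            then show ?thesis using Zc False iN nn by (auto simp: Mt_def Nr_def)
          next
            case True
            then have jj: "j = n - 1 \<or> j = n" using jF n by auto
            have Sn1: "n + 1 \<in> Sset n t \<longleftrightarrow> t \<noteq> 2" and Sn2: "n + 2 \<in> Sset n t \<longleftrightarrow> t \<in> {1,2}"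
              using t n by (auto simp: Sset_def)
            have p1: "pp n t M (n+1) = (if t = 2 then 0 else M n (n-1))"
              using Sn1 by (simp add: pp_def evM_def)
            have p2: "pp n t M (n+2) = (if t \<in> {1,2} then M n n else 0)"
              using Sn2 by (simp add: pp_def evM_def)
            have p0: "pp n t M 1 = M 1 1" using ppM n by simp
            have nm: "n - 1 \<noteq> n" "n - 2 \<noteq> n" "n - 2 \<noteq> n - 1" using n by auto
            from jj show ?thesis
            proof
              assume j: "j = n - 1"
              have "t = 2 \<Longrightarrow> M n (n-1) = 0" using F3[of "n-1"] n by (auto simp: btg_def)
              then show ?thesis using j iN nn nm p1 t by (auto simp: Mt_def Nr_def)
            next
              assume j: "j = n"
              have t3: "t = 3 \<Longrightarrow> M n n = of_nat (n-2) * M 1 1"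
              proof -
                assume t3: "t = 3"
                have h1: "M (n-1) (n-1) = M 1 1 + M n n" using F3[of "n-1"] t3 by (simp add: btg_def)
                have c: "of_nat (n-1) = (of_nat n - 1 :: complex)" "of_nat (n-2) = (of_nat n - 2 :: complex)"
                  using n by (simp_all add: of_nat_diff)
                show ?thesis using h1 R c by algebra
              qed
              have t4: "t = 4 \<Longrightarrow> M n n = (of_nat n - 1) / 2 * M 1 1"
              proof -
                assume t4: "t = 4"
                have c: "of_nat (n-1) = (of_nat n - 1 :: complex)" using n by (simp add: of_nat_diff)
                have "2 * M n n = (of_nat n - 1) * M 1 1" using F2 R c t4 by simp
                then show ?thesis by (simp add: field_simps)
              qed
              have t5: "t = 5 \<Longrightarrow> M n n = 0"
              proof -
                assume t5: "t = 5"
                have "M (n-1) (n-1) = 2 * M n n" using F2 t5 by simp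
                then show ?thesis using R M11 t5 by simp
              qed
              show ?thesis using j iN nn nm p2 p0 t t3 t4 t5 by (auto simp: Mt_def Nr_def)
            qed
          qed
        qed
      qed
    qed
  qed
qed

definition EQmu :: "nat \<Rightarrow> nat \<Rightarrow> (nat \<Rightarrow> nat \<Rightarrow> complex) \<Rightarrow> nat \<Rightarrow> nat \<Rightarrow> nat \<Rightarrow> bool" where
  "EQmu n t M i l j \<longleftrightarrow>
     (if i + l \<le> n - 1 then M (i+l) j else 0) + (if t \<in> {4,5} \<and> i = n \<and> l = n then M (n-1) j else 0) =
     ((if l < j \<and> j \<le> n - 1 then M i (j - l) else 0) + (if t \<in> {4,5} \<and> l = n \<and> j = n - 1 then M i n else 0))
   + ((if i < j \<and> j \<le> n - 1 then M l (j - i) else 0) + (if t \<in> {4,5} \<and> i = n \<and> j = n - 1 then M l n else 0))"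

lemma EQmu_sym: "EQmu n t M i l j \<longleftrightarrow> EQmu n t M l i j"
  unfolding EQmu_def by (simp add: add.commute conj_commute)

lemma Emu_EQ: "Emu n t M \<longleftrightarrow> (\<forall>i\<in>{1..n}. \<forall>l\<in>{1..n}. \<forall>j. EQmu n t M i l j)"
  unfolding Emu_def EQmu_def ..

lemma EQ_1n: assumes "n > 3" shows "EQmu n t M 1 n j \<longleftrightarrow>
   0 = (if t \<in> {4,5} \<and> j = n - 1 then M 1 n else 0) + (if 1 < j \<and> j \<le> n - 1 then M n (j - 1) else 0)"
proof -
  obtain N where "n = Suc (3 + N)" using less_imp_Suc_add[OF assms(1)] by blast
  then have nN: "n = Suc (Suc (Suc (Suc N)))" by (simp add: numeral_3_eq_3)
  show ?thesis unfolding EQmu_def by (simp add: nN)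
qed

lemma EQ_mn: assumes "n > 3" "2 \<le> i" "i \<le> n - 1" shows "EQmu n t M i n j \<longleftrightarrow>
   0 = (if t \<in> {4,5} \<and> j = n - 1 then M i n else 0) + (if i < j \<and> j \<le> n - 1 then M n (j - i) else 0)"
proof -
  obtain N where "n = Suc (3 + N)" using less_imp_Suc_add[OF assms(1)] by blast
  then have nN: "n = Suc (Suc (Suc (Suc N)))" by (simp add: numeral_3_eq_3)
  show ?thesis using assms unfolding EQmu_def by (simp add: nN)
qed

lemma EQ_nn: assumes "n > 3" shows "EQmu n t M n n j \<longleftrightarrow>
   (if t \<in> {4,5} then M (n - 1) j else 0) = 2 * (if t \<in> {4,5} \<and> j = n - 1 then M n n else 0)"
proof -
  obtain N where "n = Suc (3 + N)" using less_imp_Suc_add[OF assms(1)] by blast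
  then have nN: "n = Suc (Suc (Suc (Suc N)))" by (simp add: numeral_3_eq_3)
  show ?thesis unfolding EQmu_def by (auto simp add: nN)
qed

context
  fixes n t :: nat and p :: "nat \<Rightarrow> complex"
  assumes n: "n > 3" and t: "t \<in> {1..5}" and p1: "t \<in> {2,5} \<Longrightarrow> p 1 = 0"
begin

lemma c11: "EQmu n t (Mt n t p) 1 1 j"
proof (cases "2 \<le> j \<and> j \<le> n - 1")
  case True
  then obtain m where j: "j = m + 2" using le_Suc_ex[of 2 j] by auto
  show ?thesis using True n unfolding EQmu_def j
    by (auto simp add: Mt_1 Mt_1' Mt_mid)
next
  case False
  then show ?thesis using n unfolding EQmu_def by (auto simp add: Mt_1 Mt_1' Mt_mid)
qed

lemma c1m: assumes l: "2 \<le> l" "l \<le> n - 1" shows "EQmu n t (Mt n t p) 1 l j"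
proof (cases "l + 1 \<le> j \<and> j \<le> n - 1")
  case True
  then obtain m where j: "j = m + l + 1" using le_Suc_ex[of "l+1" j] by auto
  have a: "1 + l \<le> n - 1" "2 \<le> 1 + l" using True l by auto
  have v1: "Mt n t p (1 + l) j = of_nat (1 + l) * p (m + 1)"
    using Mt_mid[OF a(2) a(1), of t p j] True by (simp add: j)
  have mn: "m + 1 \<le> n" using True j by auto
  have v2: "Mt n t p 1 (j - l) = p (m + 1)" using Mt_1[of n t p "j - l"] True n mn by (simp add: j)
  have v3: "Mt n t p l (j - 1) = of_nat l * p (m + 1)"
    using Mt_mid[OF l, of t p "j - 1"] True by (simp add: j)
  have f: "l < j" "1 < j" "l \<noteq> n" "(1::nat) \<noteq> n" using True l n by auto
  have "EQmu n t (Mt n t p) 1 l j \<longleftrightarrow> Mt n t p (1 + l) j = Mt n t p 1 (j - l) + Mt n t p l (j - 1)"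
    unfolding EQmu_def using a f True by simp
  then show ?thesis using v1 v2 v3 by (simp add: algebra_simps)
next
  case False
  have "\<not> (l < j \<and> j \<le> n - 1) \<or> j - l = 0 \<or> j - l > n" using False by auto
  show ?thesis using False n l unfolding EQmu_def
    by (auto simp add: Mt_1 Mt_1' Mt_mid)
qed

lemma c1n: "EQmu n t (Mt n t p) 1 n j"
proof -
  have m1n: "Mt n t p 1 n = p n" using n Mt_1[of n t p n] by simp
  have "(if t \<in> {4,5} \<and> j = n - 1 then p n else 0) + (if 1 < j \<and> j \<le> n - 1 then Nr n t p (j - 1) else 0) = 0"
  proof (cases "1 < j \<and> j \<le> n - 1")
    case True
    have e: "(j - 1 = n - 2) = (j = n - 1)" using True n by auto
    show ?thesis using True n Nr_low[OF n, of "j - 1" t p] t by (auto simp: e)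
  next
    case False
    then have "j \<noteq> n - 1" using n by auto
    then show ?thesis using False by auto
  qed
  then show ?thesis unfolding EQ_1n[OF n] Mt_n[OF n] m1n by (rule sym)
qed

lemma cmm: assumes i: "2 \<le> i" "i \<le> n - 1" and l: "2 \<le> l" "l \<le> n - 1" shows "EQmu n t (Mt n t p) i l j"
proof (cases "i + l \<le> j \<and> j \<le> n - 1")
  case True
  then obtain m where j: "j = m + i + l" using le_Suc_ex[of "i+l" j] by auto
  have a: "2 \<le> i + l" "i + l \<le> n - 1" using True i by auto
  have v1: "Mt n t p (i + l) j = of_nat (i + l) * p (m + 1)"
    using Mt_mid[OF a, of t p j] True by (simp add: j)
  have v2: "Mt n t p i (j - l) = of_nat i * p (m + 1)"
    using Mt_mid[OF i, of t p "j - l"] True by (simp add: j)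
  have v3: "Mt n t p l (j - i) = of_nat l * p (m + 1)"
    using Mt_mid[OF l, of t p "j - i"] True by (simp add: j)
  have f: "l < j" "i < j" "l \<noteq> n" "i \<noteq> n" using True i l n by auto
  have "EQmu n t (Mt n t p) i l j \<longleftrightarrow> Mt n t p (i + l) j = Mt n t p i (j - l) + Mt n t p l (j - i)"
    unfolding EQmu_def using a f True by simp
  then show ?thesis using v1 v2 v3 by (simp add: algebra_simps)
next
  case False
  have z1: "(if i + l \<le> n - 1 then Mt n t p (i + l) j else 0) = 0"
  proof (cases "i + l \<le> n - 1")
    case True
    have a2: "2 \<le> i + l" using i by auto
    show ?thesis using Mt_mid[OF a2 True, of t p j] False True by auto
  qed simp
  have z2: "(if l < j \<and> j \<le> n - 1 then Mt n t p i (j - l) else 0) = 0"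
    using Mt_mid[OF i, of t p "j - l"] False by auto
  have z3: "(if i < j \<and> j \<le> n - 1 then Mt n t p l (j - i) else 0) = 0"
    using Mt_mid[OF l, of t p "j - i"] False by auto
  have f: "i \<noteq> n" "l \<noteq> n" using i l n by auto
  show ?thesis unfolding EQmu_def using z1 z2 z3 f by simp
qed

lemma cmn: assumes i: "2 \<le> i" "i \<le> n - 1" shows "EQmu n t (Mt n t p) i n j"
proof -
  have nn: "\<not> n \<le> n - Suc 0" using n by auto
  have min: "Mt n t p i n = 0" using n i Mt_mid[OF i, of t p n] nn by simp
  have "(if i < j \<and> j \<le> n - 1 then Nr n t p (j - i) else 0) = 0"
    using Nr_low[OF n, of "j - i" t p] t n i by auto
  then show ?thesis unfolding EQ_mn[OF n i] Mt_n[OF n] min by simp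
qed

lemma cnn: "EQmu n t (Mt n t p) n n j"
proof -
  have a: "2 \<le> n - 1" "n - 1 \<le> n - 1" using n by auto
  have f: "\<not> (n + n \<le> n - 1)" "\<not> (n < j \<and> j \<le> n - 1)" using n by auto
  have r: "Mt n t p (n - 1) j = (if j = n - 1 then of_nat (n - 1) * p 1 else 0)"
    using n Mt_mid[OF a, of t p j] by auto
  have c: "of_nat (n-1) = (of_nat n - 1 :: complex)" using n by (simp add: of_nat_diff)
  have "(if t \<in> {4,5} then Mt n t p (n - 1) j else 0) = 2 * (if t \<in> {4,5} \<and> j = n - 1 then Nr n t p n else 0)"
  proof (cases "t \<in> {4,5} \<and> j = n - 1")
    case True
    then have "t = 4 \<or> t = 5" by auto
    then show ?thesis
    proof
      assume t4: "t = 4"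
      show ?thesis using True r c by (simp add: Nr_nn[OF n] t4)
    next
      assume t5: "t = 5"
      show ?thesis using True r c p1 by (simp add: Nr_nn[OF n] t5)
    qed
  next
    case False
    then show ?thesis using r by auto
  qed
  then show ?thesis using n by (simp add: EQ_nn[OF n] Mt_n)
qed

lemma Emu_Mt: "Emu n t (Mt n t p)"
  unfolding Emu_EQ
proof (intro ballI allI)
  fix i l j assume i: "i \<in> {1..n}" and l: "l \<in> {1..n}"
  have ci: "i = 1 \<or> (2 \<le> i \<and> i \<le> n - 1) \<or> i = n" using i by auto
  have cl: "l = 1 \<or> (2 \<le> l \<and> l \<le> n - 1) \<or> l = n" using l by auto
  have all: "EQmu n t (Mt n t p) a b j" if "a \<le> b" "a = 1 \<or> (2 \<le> a \<and> a \<le> n - 1) \<or> a = n"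
     "b = 1 \<or> (2 \<le> b \<and> b \<le> n - 1) \<or> b = n" for a b
    using that c11 c1m c1n cmm cmn cnn n by auto
  show "EQmu n t (Mt n t p) i l j"
  proof (cases "i \<le> l")
    case True then show ?thesis using all ci cl by blast
  next
    case False then show ?thesis using all[of l i] ci cl EQmu_sym by auto
  qed
qed

lemma Mt_x1: assumes "x \<in> {2..n}" shows "Mt n t p x 1 = 0"
proof (cases "x = n")
  case True
  have "Nr n t p 1 = 0" using Nr_low[OF n, of 1 t p] t n by auto
  then show ?thesis using True Mt_n[OF n] by simp
next
  case False
  then show ?thesis using assms Mt_mid[of x n t p 1] by auto
qed

lemma Mt_xn: assumes "x \<in> {2..n-1}" shows "Mt n t p x n = 0"
  using assms Mt_mid[of x n t p n] n by auto

lemma Mt_b: assumes "t \<in> {2,3,5}"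
  shows "Mt n t p (btg n t) j = (if j = btg n t then Mt n t p 1 1 + Mt n t p n n else 0)"
proof -
  have m11: "Mt n t p 1 1 = p 1" using n by (simp add: Mt_1 Mt_1')
  have mnn: "Mt n t p n n = Nr n t p n" by (rule Mt_n[OF n])
  consider "t = 2" | "t = 3" | "t = 5" using assms by auto
  then show ?thesis
  proof cases
    case 1
    have "Nr n t p j = (if j = n then p (n+2) else 0)" using 1 by (simp add: Nr_def)
    then show ?thesis using 1 p1 m11 mnn Mt_n[OF n, of t p j] Nr_nn[OF n, of t p] by (simp add: btg_def)
  next
    case 2
    have a: "2 \<le> n - 1" "n - 1 \<le> n - 1" using n by auto
    have c: "of_nat (n-1) = (of_nat n - 1 :: complex)" "of_nat (n-2) = (of_nat n - 2 :: complex)"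
      using n by (simp_all add: of_nat_diff)
    have "Mt n t p (n - 1) j = (if j = n - 1 then of_nat (n - 1) * p 1 else 0)"
      using Mt_mid[OF a, of t p j] n by auto
    moreover have nr: "Nr n t p n = of_nat (n-2) * p 1" using Nr_nn[OF n, of t p] 2 by simp
    moreover have e: "of_nat (n-1) * p 1 = p 1 + of_nat (n-2) * p 1" using c by algebra
    ultimately show ?thesis using 2 m11 mnn by (simp add: btg_def)
  next
    case 3
    have a: "2 \<le> n - 1" "n - 1 \<le> n - 1" using n by auto
    have "Mt n t p (n - 1) j = (if j = n - 1 then of_nat (n - 1) * p 1 else 0)"
      using Mt_mid[OF a, of t p j] n by auto
    then show ?thesis using 3 p1 m11 mnn Nr_nn[OF n, of t p] by (simp add: btg_def)
  qed
qed

lemma Ebr_Mt: "Ebr n t (Mt n t p)"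
  unfolding Ebr_def
proof (intro ballI allI)
  fix i l j assume i: "i \<in> {1..n}" and l: "l \<in> {1..n}"
  let ?M = "Mt n t p"
  have n1: "n \<noteq> 1" using n by simp
  show "(if t \<in> {2,3,5} then (if i = 1 \<and> l = n then ?M (btg n t) j else if i = n \<and> l = 1 then - ?M (btg n t) j else 0) else 0) =
     (if t \<in> {2,3,5} \<and> j = btg n t then (if l = n then ?M i 1 else if l = 1 then - ?M i n else 0) else 0)
   + (if t \<in> {2,3,5} \<and> j = btg n t then (if i = 1 then ?M l n else if i = n then - ?M l 1 else 0) else 0)"
  proof (cases "t \<in> {2,3,5}")
    case False
    then show ?thesis by simp
  next
    case tt: True
    have ci: "i = 1 \<or> i \<in> {2..n-1} \<or> i = n" using i by auto
    have cl: "l = 1 \<or> l \<in> {2..n-1} \<or> l = n" using l by auto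
    have x1: "\<And>x. x \<in> {2..n-1} \<Longrightarrow> ?M x 1 = 0" using Mt_x1 by auto
    have xn1: "?M n 1 = 0" using Mt_x1[of n] n by auto
    show ?thesis using ci cl tt n1 Mt_b[OF tt, of j] x1 xn1 Mt_xn by auto
  qed
qed

end

lemma mu_V: "n > 3 \<Longrightarrow> k \<notin> {1..n} \<Longrightarrow> mu n t i l k = 0"
  by (auto simp: mu_def)

lemma br_V: "n > 3 \<Longrightarrow> k \<notin> {1..n} \<Longrightarrow> br n t i l k = 0"
  by (auto simp: br_def)

lemma genP_V: assumes "n > 3" "\<And>i l k. k \<notin> {1..n} \<Longrightarrow> c i l k = 0" shows "genP n c x y \<in> V n"
  using assms by (auto simp: V_def genP_def)

lemma derA:
  assumes d: "is_der n t \<phi>" and n: "n > 3" and t: "t \<in> {1..5}"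
  shows "\<phi> = Lm n (Mt n t (pp n t (\<lambda>i j. \<phi> (ebas i) j)))"
proof -
  let ?M = "\<lambda>i j. \<phi> (ebas i) j"
  have n1: "n \<ge> 1" using n by simp
  have rep: "\<phi> = Lm n ?M" by (rule der_repr[OF d n1])
  have add: "\<forall>x\<in>V n. \<forall>y\<in>V n. \<phi> (x + y) = \<phi> x + \<phi> y" using d unfolding is_der_def by blast
  have hom: "\<forall>c. \<forall>x\<in>V n. \<phi> (\<lambda>k. c * x k) = (\<lambda>k. c * \<phi> x k)" using d unfolding is_der_def by blast
  have lm: "\<forall>x\<in>V n. \<forall>y\<in>V n. \<phi> (genP n (mu n t) x y) = genP n (mu n t) (\<phi> x) y + genP n (mu n t) x (\<phi> y)"
    using d unfolding is_der_def pmul_genP by blast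
  have lb: "\<forall>x\<in>V n. \<forall>y\<in>V n. \<phi> (genP n (br n t) x y) = genP n (br n t) (\<phi> x) y + genP n (br n t) x (\<phi> y)"
    using d unfolding is_der_def pbr_genP by blast
  have Zc: "\<forall>i j. j \<notin> {1..n} \<longrightarrow> ?M i j = 0"
  proof (intro allI impI)
    fix i j assume j: "j \<notin> {1..n}"
    show "?M i j = 0"
    proof (cases "i \<in> {1..n}")
      case True
      then have "\<phi> (ebas i) \<in> V n" using d ebas_V[OF True] unfolding is_der_def by blast
      then show ?thesis using j by (auto simp: V_def)
    next
      case False
      then have "\<phi> (ebas i) = 0" using d ebas_notV[OF False] unfolding is_der_def by blast
      then show ?thesis by simp
    qed
  qed
  have Zr: "\<forall>i j. i \<notin> {1..n} \<longrightarrow> ?M i j = 0"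
  proof (intro allI impI)
    fix i j assume "i \<notin> {1..n}"
    then have "\<phi> (ebas i) = 0" using d ebas_notV unfolding is_der_def by blast
    then show "?M i j = 0" by simp
  qed
  have E: "Emu n t ?M"
    unfolding Emu_iff[OF n]
  proof (intro ballI allI)
    fix i l j assume i: "i \<in> {1..n}" and l: "l \<in> {1..n}"
    show "(\<Sum>k\<in>{1..n}. mu n t i l k * ?M k j) = (\<Sum>a\<in>{1..n}. ?M i a * mu n t a l j) + (\<Sum>b\<in>{1..n}. ?M l b * mu n t i b j)"
      by (rule der_basis[OF add hom n1 lm _ i l]) (use mu_V[OF n] in auto)
  qed
  have B: "Ebr n t ?M"
    unfolding Ebr_iff[OF n]
  proof (intro ballI allI)
    fix i l j assume i: "i \<in> {1..n}" and l: "l \<in> {1..n}"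
    show "(\<Sum>k\<in>{1..n}. br n t i l k * ?M k j) = (\<Sum>a\<in>{1..n}. ?M i a * br n t a l j) + (\<Sum>b\<in>{1..n}. ?M l b * br n t i b j)"
      by (rule der_basis[OF add hom n1 lb _ i l]) (use br_V[OF n] in auto)
  qed
  have "?M = Mt n t (pp n t ?M)"
    using matA[OF n t Zc Zr E B] by (intro ext) 
  then show ?thesis using rep by metis
qed

lemma Mt_zc: assumes "n > 3" "j \<notin> {1..n}" shows "Mt n t p i j = 0"
  using assms Nr_out[OF assms] by (auto simp: Mt_def)

lemma derB:
  assumes n: "n > 3" and t: "t \<in> {1..5}" and p1: "t \<in> {2,5} \<Longrightarrow> p 1 = 0"
  shows "is_der n t (Lm n (Mt n t p))"
proof -
  let ?L = "Lm n (Mt n t p)"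
  have a1: "\<forall>x. x \<notin> V n \<longrightarrow> ?L x = 0" by (simp add: Lm_def zero_fun_def)
  have a2: "\<forall>x\<in>V n. ?L x \<in> V n" using Mt_zc[OF n] by (auto simp: Lm_def V_def)
  have a3: "\<forall>x\<in>V n. \<forall>y\<in>V n. ?L (x + y) = ?L x + ?L y"
  proof (intro ballI)
    fix x y assume x: "x \<in> V n" and y: "y \<in> V n"
    have "x + y \<in> V n" using x y by (auto simp: V_def)
    then show "?L (x + y) = ?L x + ?L y" using x y
      by (simp add: Lm_def fun_eq_iff distrib_right sum.distrib)
  qed
  have a4: "\<forall>c. \<forall>x\<in>V n. ?L (\<lambda>k. c * x k) = (\<lambda>k. c * ?L x k)"
  proof (intro allI ballI)
    fix c x assume x: "x \<in> V n"
    have "(\<lambda>k. c * x k) \<in> V n" using x by (auto simp: V_def)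
    then show "?L (\<lambda>k. c * x k) = (\<lambda>k. c * ?L x k)" using x
      by (simp add: Lm_def fun_eq_iff sum_distrib_left mult.assoc)
  qed
  have Em: "\<forall>i\<in>{1..n}. \<forall>l\<in>{1..n}. \<forall>j. (\<Sum>k\<in>{1..n}. mu n t i l k * Mt n t p k j) =
         (\<Sum>a\<in>{1..n}. Mt n t p i a * mu n t a l j) + (\<Sum>b\<in>{1..n}. Mt n t p l b * mu n t i b j)"
    using Emu_Mt[of n t p, OF n t p1] Emu_iff[OF n] by blast
  have Eb: "\<forall>i\<in>{1..n}. \<forall>l\<in>{1..n}. \<forall>j. (\<Sum>k\<in>{1..n}. br n t i l k * Mt n t p k j) =
         (\<Sum>a\<in>{1..n}. Mt n t p i a * br n t a l j) + (\<Sum>b\<in>{1..n}. Mt n t p l b * br n t i b j)"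
    using Ebr_Mt[of n t p, OF n t p1] Ebr_iff[OF n] by blast
  have a5: "\<forall>x\<in>V n. \<forall>y\<in>V n. ?L (pmul n t x y) = pmul n t (?L x) y + pmul n t x (?L y)"
    unfolding pmul_genP using Lm_leib[OF genP_V[OF n mu_V[OF n]] Em] by blast
  have a6: "\<forall>x\<in>V n. \<forall>y\<in>V n. ?L (pbr n t x y) = pbr n t (?L x) y + pbr n t x (?L y)"
    unfolding pbr_genP using Lm_leib[OF genP_V[OF n br_V[OF n]] Eb] by blast
  show ?thesis unfolding is_der_def using a1 a2 a3 a4 a5 a6 by blast
qed

lemma Nr_add: "Nr n t (\<lambda>m. q1 m + q2 m) j = Nr n t q1 j + Nr n t q2 j"
  unfolding Nr_def by (simp add: distrib_left)
lemma Mt_add: "Mt n t (\<lambda>m. q1 m + q2 m) i j = Mt n t q1 i j + Mt n t q2 i j"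
  unfolding Mt_def by (simp add: distrib_left Nr_add)
lemma Nr_scale: "Nr n t (\<lambda>m. c * q m) j = c * Nr n t q j"
  unfolding Nr_def by (simp add: mult_ac)
lemma Mt_scale: "Mt n t (\<lambda>m. c * q m) i j = c * Mt n t q i j"
  unfolding Mt_def by (simp add: Nr_scale mult_ac)

lemma Mt_zero: "Mt n t (\<lambda>m. 0) i j = 0"
  using Mt_scale[of n t 0 "\<lambda>m. 0" i j] by simp

lemma Mt_sum: "finite A \<Longrightarrow> Mt n t (\<lambda>m. \<Sum>k\<in>A. c k * q k m) i j = (\<Sum>k\<in>A. c k * Mt n t (q k) i j)"
proof (induction A rule: finite_induct)
  case empty
  then show ?case using Mt_zero by simp
next
  case (insert a A)
  have "Mt n t (\<lambda>m. \<Sum>k\<in>insert a A. c k * q k m) i j = Mt n t (\<lambda>m. c a * q a m + (\<Sum>k\<in>A. c k * q k m)) i j"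
    using insert by simp
  also have "\<dots> = c a * Mt n t (q a) i j + Mt n t (\<lambda>m. \<Sum>k\<in>A. c k * q k m) i j"
    by (simp add: Mt_add Mt_scale)
  finally show ?case using insert by simp
qed

lemma Sset_sub: "Sset n t \<subseteq> {1..n+2}"
  by (auto simp: Sset_def)

lemma Sset_fin: "finite (Sset n t)"
  using Sset_sub finite_subset by blast

lemma Sset_1: "t \<in> {2,5} \<Longrightarrow> 1 \<notin> Sset n t"
  by (auto simp: Sset_def)

lemma evM_Mt: assumes n: "n > 3" and t: "t \<in> {1..5}" and m: "m \<in> Sset n t"
  shows "evM n (Mt n t q) m = q m"
proof -
  have "m \<in> {1..n+2}" using m Sset_sub by blast
  then have m1: "1 \<le> m" "m \<le> n + 2" by auto
  consider "m \<le> n" | "m = n + 1" | "m = n + 2" using m1 by linarith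
  then show ?thesis
  proof cases
    case 1
    then show ?thesis using m1 by (simp add: evM_def Mt_1 Mt_1')
  next
    case 2
    then have "t \<noteq> 2" using m by (auto simp: Sset_def)
    then show ?thesis using 2 n Nr_n1[OF n, of t q] by (simp add: evM_def Mt_n)
  next
    case 3
    then have "t = 1 \<or> t = 2" using m t by (auto simp: Sset_def split: if_splits)
    then show ?thesis using 3 n Nr_nn[OF n, of t q] by (auto simp: evM_def Mt_n)
  qed
qed

definition EV :: "nat \<Rightarrow> nat \<Rightarrow> ((nat \<Rightarrow> complex) \<Rightarrow> nat \<Rightarrow> complex) \<Rightarrow> complex" where
  "EV n m \<Phi> = evM n (\<lambda>i j. \<Phi> (ebas i) j) m"

lemma EV_sum: "finite A \<Longrightarrow> EV n m (\<Sum>k\<in>A. dscale (c k) (F k)) = (\<Sum>k\<in>A. c k * EV n m (F k))"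
  by (simp add: EV_def evM_def sum_fun_app dscale_def)

lemma EV_zero: "EV n m 0 = 0"
  by (simp add: EV_def evM_def)

lemma EV_Lm: assumes n: "n > 3" shows "EV n m (Lm n M) = evM n M m"
proof -
  have "1 \<in> {1..n}" "n \<in> {1..n}" using n by auto
  then show ?thesis by (simp add: EV_def evM_def Lm_ebas)
qed

lemma dimDer_eq:
  assumes n: "n > 3" and t: "t \<in> {1..5}"
  shows "dimDer n t = card (Sset n t)"
proof -
  interpret vs: vector_space dscale by (rule vector_space_dscale)
  define S where "S = Sset n t"
  define D where "D k = Lm n (Mt n t (ebas k))" for k
  have finS: "finite S" unfolding S_def by (rule Sset_fin)
  have Dder: "D k \<in> Der n t" if k: "k \<in> S" for k
  proof -
    have "t \<in> {2,5} \<Longrightarrow> ebas k 1 = 0" using k Sset_1 unfolding S_def by (auto simp: ebas_def)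
    then show ?thesis unfolding D_def Der_def using derB[OF n t] by blast
  qed
  have evD: "EV n m (D k) = ebas k m" if "m \<in> S" for k m
    unfolding D_def using EV_Lm[OF n] evM_Mt[OF n t] that unfolding S_def by simp
  have inj: "inj_on D S"
  proof (rule inj_onI)
    fix a b assume a: "a \<in> S" and b: "b \<in> S" and e: "D a = D b"
    have "ebas a a = ebas b a" using evD[OF a, of a] evD[OF a, of b] e by simp
    then show "a = b" by (auto simp: ebas_def split: if_splits)
  qed
  have sub: "D ` S \<subseteq> Der n t" using Dder by auto
  have span: "Der n t \<subseteq> vs.span (D ` S)"
  proof
    fix \<phi> assume "\<phi> \<in> Der n t"
    then have d: "is_der n t \<phi>" by (simp add: Der_def)
    define p where "p = pp n t (\<lambda>i j. \<phi> (ebas i) j)"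
    have phi: "\<phi> = Lm n (Mt n t p)" unfolding p_def by (rule derA[OF d n t])
    have psupp: "\<And>m. m \<notin> S \<Longrightarrow> p m = 0" unfolding p_def pp_def S_def by simp
    have pexp: "p = (\<lambda>m. \<Sum>k\<in>S. p k * ebas k m)"
    proof
      fix m show "p m = (\<Sum>k\<in>S. p k * ebas k m)" using sum_ebas_idx[OF finS, of p m] psupp by auto
    qed
    have Mtp: "Mt n t p i j = (\<Sum>k\<in>S. p k * Mt n t (ebas k) i j)" for i j
      by (subst pexp) (rule Mt_sum[OF finS])
    have "\<phi> = (\<Sum>k\<in>S. dscale (p k) (D k))"
    proof (intro ext)
      fix x j
      show "\<phi> x j = (\<Sum>k\<in>S. dscale (p k) (D k)) x j"
      proof (cases "x \<in> V n")
        case True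
        have "\<phi> x j = (\<Sum>i\<in>{1..n}. x i * (\<Sum>k\<in>S. p k * Mt n t (ebas k) i j))"
          using True by (simp add: phi Lm_def Mtp)
        also have "\<dots> = (\<Sum>k\<in>S. p k * (\<Sum>i\<in>{1..n}. x i * Mt n t (ebas k) i j))"
          apply (simp only: sum_distrib_left)
          apply (subst sum.swap)
          apply (simp add: mult_ac)
          done
        also have "\<dots> = (\<Sum>k\<in>S. dscale (p k) (D k)) x j"
          using True by (simp add: sum_fun_app dscale_def D_def Lm_def)
        finally show ?thesis .
      next
        case False
        then show ?thesis by (simp add: phi Lm_def sum_fun_app dscale_def D_def)
      qed
    qed
    also have "\<dots> \<in> vs.span (D ` S)"
      by (rule vs.span_sum) (auto intro: vs.span_scale vs.span_base)
    finally show "\<phi> \<in> vs.span (D ` S)" .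
  qed
  have key: "f (D m) = 0" if s: "(\<Sum>x\<in>D ` S. dscale (f x) x) = 0" and m: "m \<in> S" for f m
  proof -
    have "(\<Sum>k\<in>S. dscale (f (D k)) (D k)) = 0" using s sum.reindex[OF inj, of "\<lambda>x. dscale (f x) x"] by simp
    then have "EV n m (\<Sum>k\<in>S. dscale (f (D k)) (D k)) = 0" by (simp add: EV_zero)
    then have "(\<Sum>k\<in>S. f (D k) * ebas k m) = 0" using EV_sum[OF finS] evD[OF m] by simp
    then show "f (D m) = 0" using sum_ebas_idx[OF finS, of "\<lambda>k. f (D k)" m] m by simp
  qed
  have indep: "vs.independent (D ` S)"
    by (rule vs.independent_if_scalars_zero) (use finS key in auto)
  have card: "card (D ` S) = card S" using card_image[OF inj] .
  show ?thesis unfolding dimDer_def S_def[symmetric]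
    by (rule vs.dim_unique[OF sub span indep card])
qed

lemma phi_rows:
  assumes "\<phi> \<in> Der n t" "n > 3" "t \<in> {1..5}"
  shows "\<exists>p. (\<forall>m. m \<notin> Sset n t \<longrightarrow> p m = 0) \<and> (\<forall>i\<in>{1..n}. \<phi> (ebas i) = Mt n t p i)"
proof -
  have d: "is_der n t \<phi>" using assms(1) by (simp add: Der_def)
  define p where "p = pp n t (\<lambda>i j. \<phi> (ebas i) j)"
  have phi: "\<phi> = Lm n (Mt n t p)" unfolding p_def by (rule derA[OF d assms(2,3)])
  have "\<forall>i\<in>{1..n}. \<phi> (ebas i) = Mt n t p i" by (subst phi) (simp add: Lm_ebas)
  moreover have "\<forall>m. m \<notin> Sset n t \<longrightarrow> p m = 0" by (simp add: p_def pp_def)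
  ultimately show ?thesis by blast
qed

lemma R1: "(\<lambda>j. \<Sum>k\<in>{1..n}. p k * ebas k j) = Mt n t p 1"
  by (rule ext) (simp add: sum_ebas_idx Mt_1 Mt_1')

lemma R1': assumes "p 1 = 0" shows "(\<lambda>j. \<Sum>k\<in>{2..n}. p k * ebas k j) = Mt n t p 1"
proof
  fix j show "(\<Sum>k\<in>{2..n}. p k * ebas k j) = Mt n t p 1 j"
    using assms by (cases "j = 1") (auto simp: sum_ebas_idx Mt_1 Mt_1')
qed

lemma Rmid: assumes "i \<in> {2..n-1}"
  shows "(\<lambda>j. \<Sum>k\<in>{i..n-1}. of_nat i * p (k - i + 1) * ebas k j) = Mt n t p i"
proof
  fix j show "(\<Sum>k\<in>{i..n-1}. of_nat i * p (k - i + 1) * ebas k j) = Mt n t p i j"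
    using assms sum_ebas_idx[of "{i..n-1}" "\<lambda>k. of_nat i * p (k - i + 1)" j] Mt_mid[of i n t p j] by auto
qed

lemma Rmid': assumes "i \<in> {2..n-1}" "p 1 = 0"
  shows "(\<lambda>j. \<Sum>k\<in>{i+1..n-1}. of_nat i * p (k - i + 1) * ebas k j) = Mt n t p i"
proof
  fix j show "(\<Sum>k\<in>{i+1..n-1}. of_nat i * p (k - i + 1) * ebas k j) = Mt n t p i j"
    using assms sum_ebas_idx[of "{i+1..n-1}" "\<lambda>k. of_nat i * p (k - i + 1)" j] Mt_mid[of i n t p j]
    by (cases "j = i") auto
qed

lemma card_S: assumes "n > 3"
  shows "card (Sset n 1) = n + 2" "card (Sset n 2) = n" "card (Sset n 3) = n + 1"
        "card (Sset n 4) = n + 1" "card (Sset n 5) = n"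
proof -
  show "card (Sset n 1) = n + 2" by (simp add: Sset_def)
  show "card (Sset n 3) = n + 1" by (simp add: Sset_def)
  show "card (Sset n 4) = n + 1" by (simp add: Sset_def)
  show "card (Sset n 5) = n" by (simp add: Sset_def)
  have "card ({2..n} \<union> {n+2}) = card {2..n} + card {n+2}"
    by (rule card_Un_disjoint) auto
  then show "card (Sset n 2) = n" using assms by (simp add: Sset_def)
qed

theorem lemma5p2:
  fixes n :: nat
  assumes "n > 3"
  shows
   "(\<forall>\<phi>\<in>Der n 1. \<exists>(lam :: nat \<Rightarrow> complex) a b.
        \<phi> (ebas 1) = (\<lambda>j. \<Sum>k\<in>{1..n}. lam k * ebas k j) \<and>
        (\<forall>i\<in>{2..n-1}. \<phi> (ebas i) = (\<lambda>j. \<Sum>k\<in>{i..n-1}. of_nat i * lam (k - i + 1) * ebas k j)) \<and>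
        \<phi> (ebas n) = (\<lambda>j. a * ebas (n-1) j + b * ebas n j))
    \<and> dimDer n 1 = n + 2
    \<and> (\<forall>\<phi>\<in>Der n 2. \<exists>(lam :: nat \<Rightarrow> complex) b.
        \<phi> (ebas 1) = (\<lambda>j. \<Sum>k\<in>{2..n}. lam k * ebas k j) \<and>
        (\<forall>i\<in>{2..n-1}. \<phi> (ebas i) = (\<lambda>j. \<Sum>k\<in>{i+1..n-1}. of_nat i * lam (k - i + 1) * ebas k j)) \<and>
        \<phi> (ebas n) = (\<lambda>j. b * ebas n j))
    \<and> dimDer n 2 = n
    \<and> (\<forall>\<phi>\<in>Der n 3. \<exists>(lam :: nat \<Rightarrow> complex) a.
        \<phi> (ebas 1) = (\<lambda>j. \<Sum>k\<in>{1..n}. lam k * ebas k j) \<and>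
        (\<forall>i\<in>{2..n-1}. \<phi> (ebas i) = (\<lambda>j. \<Sum>k\<in>{i..n-1}. of_nat i * lam (k - i + 1) * ebas k j)) \<and>
        \<phi> (ebas n) = (\<lambda>j. a * ebas (n-1) j + of_nat (n - 2) * lam 1 * ebas n j))
    \<and> dimDer n 3 = n + 1
    \<and> (\<forall>\<phi>\<in>Der n 4. \<exists>(lam :: nat \<Rightarrow> complex) a.
        \<phi> (ebas 1) = (\<lambda>j. \<Sum>k\<in>{1..n}. lam k * ebas k j) \<and>
        (\<forall>i\<in>{2..n-1}. \<phi> (ebas i) = (\<lambda>j. \<Sum>k\<in>{i..n-1}. of_nat i * lam (k - i + 1) * ebas k j)) \<and>
        \<phi> (ebas n) = (\<lambda>j. - lam n * ebas (n-2) j + a * ebas (n-1) j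
                          + (of_nat n - 1) / 2 * lam 1 * ebas n j))
    \<and> dimDer n 4 = n + 1
    \<and> (\<forall>\<phi>\<in>Der n 5. \<exists>(lam :: nat \<Rightarrow> complex) a.
        \<phi> (ebas 1) = (\<lambda>j. \<Sum>k\<in>{2..n}. lam k * ebas k j) \<and>
        (\<forall>i\<in>{2..n-1}. \<phi> (ebas i) = (\<lambda>j. \<Sum>k\<in>{i+1..n-1}. of_nat i * lam (k - i + 1) * ebas k j)) \<and>
        \<phi> (ebas n) = (\<lambda>j. - lam n * ebas (n-2) j + a * ebas (n-1) j))
    \<and> dimDer n 5 = n"
proof -
  have n: "n > 3" by (rule assms)
  have i1: "(1::nat) \<in> {1..n}" and iN: "n \<in> {1..n}" and iM: "\<And>i. i \<in> {2..n-1} \<Longrightarrow> i \<in> {1..n}"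
    using n by auto
  have nd: "n - 2 \<noteq> n - 1" "n - 2 \<noteq> n" "n - 1 \<noteq> n" using n by auto
  have P1: "\<forall>\<phi>\<in>Der n 1. \<exists>(lam :: nat \<Rightarrow> complex) a b.
        \<phi> (ebas 1) = (\<lambda>j. \<Sum>k\<in>{1..n}. lam k * ebas k j) \<and>
        (\<forall>i\<in>{2..n-1}. \<phi> (ebas i) = (\<lambda>j. \<Sum>k\<in>{i..n-1}. of_nat i * lam (k - i + 1) * ebas k j)) \<and>
        \<phi> (ebas n) = (\<lambda>j. a * ebas (n-1) j + b * ebas n j)"
  proof
    fix \<phi> assume "\<phi> \<in> Der n 1"
    then obtain p where ph: "\<forall>i\<in>{1..n}. \<phi> (ebas i) = Mt n 1 p i" using phi_rows[OF _ n, of \<phi> 1] by auto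
    have "\<phi> (ebas n) = (\<lambda>j. p (n+1) * ebas (n-1) j + p (n+2) * ebas n j)"
      using ph iN nd by (auto simp: Mt_n[OF n] Nr_def ebas_def fun_eq_iff)
    then show "\<exists>(lam :: nat \<Rightarrow> complex) a b.
        \<phi> (ebas 1) = (\<lambda>j. \<Sum>k\<in>{1..n}. lam k * ebas k j) \<and>
        (\<forall>i\<in>{2..n-1}. \<phi> (ebas i) = (\<lambda>j. \<Sum>k\<in>{i..n-1}. of_nat i * lam (k - i + 1) * ebas k j)) \<and>
        \<phi> (ebas n) = (\<lambda>j. a * ebas (n-1) j + b * ebas n j)"
      using ph i1 iM R1[where n=n and p=p and t=1] Rmid[where n=n and p=p and t=1] by (intro exI[of _ p] exI[of _ "p (n+1)"] exI[of _ "p (n+2)"]) auto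
  qed
  have P2: "\<forall>\<phi>\<in>Der n 2. \<exists>(lam :: nat \<Rightarrow> complex) b.
        \<phi> (ebas 1) = (\<lambda>j. \<Sum>k\<in>{2..n}. lam k * ebas k j) \<and>
        (\<forall>i\<in>{2..n-1}. \<phi> (ebas i) = (\<lambda>j. \<Sum>k\<in>{i+1..n-1}. of_nat i * lam (k - i + 1) * ebas k j)) \<and>
        \<phi> (ebas n) = (\<lambda>j. b * ebas n j)"
  proof
    fix \<phi> assume "\<phi> \<in> Der n 2"
    then obtain p where ps: "\<forall>m. m \<notin> Sset n 2 \<longrightarrow> p m = 0" and ph: "\<forall>i\<in>{1..n}. \<phi> (ebas i) = Mt n 2 p i"
      using phi_rows[OF _ n, of \<phi> 2] by auto
    have p1: "p 1 = 0" using ps Sset_1[of 2 n] by auto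
    have "\<phi> (ebas n) = (\<lambda>j. p (n+2) * ebas n j)"
      using ph iN nd by (auto simp: Mt_n[OF n] Nr_def ebas_def fun_eq_iff)
    then show "\<exists>(lam :: nat \<Rightarrow> complex) b.
        \<phi> (ebas 1) = (\<lambda>j. \<Sum>k\<in>{2..n}. lam k * ebas k j) \<and>
        (\<forall>i\<in>{2..n-1}. \<phi> (ebas i) = (\<lambda>j. \<Sum>k\<in>{i+1..n-1}. of_nat i * lam (k - i + 1) * ebas k j)) \<and>
        \<phi> (ebas n) = (\<lambda>j. b * ebas n j)"
      using ph i1 iM R1'[where n=n and p=p and t=2, OF p1] Rmid'[where n=n and p=p, OF _ p1] by (intro exI[of _ p] exI[of _ "p (n+2)"]) auto
  qed
  have P3: "\<forall>\<phi>\<in>Der n 3. \<exists>(lam :: nat \<Rightarrow> complex) a.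
        \<phi> (ebas 1) = (\<lambda>j. \<Sum>k\<in>{1..n}. lam k * ebas k j) \<and>
        (\<forall>i\<in>{2..n-1}. \<phi> (ebas i) = (\<lambda>j. \<Sum>k\<in>{i..n-1}. of_nat i * lam (k - i + 1) * ebas k j)) \<and>
        \<phi> (ebas n) = (\<lambda>j. a * ebas (n-1) j + of_nat (n - 2) * lam 1 * ebas n j)"
  proof
    fix \<phi> assume "\<phi> \<in> Der n 3"
    then obtain p where ph: "\<forall>i\<in>{1..n}. \<phi> (ebas i) = Mt n 3 p i" using phi_rows[OF _ n, of \<phi> 3] by auto
    have "\<phi> (ebas n) = (\<lambda>j. p (n+1) * ebas (n-1) j + of_nat (n - 2) * p 1 * ebas n j)"
      using ph iN nd by (auto simp: Mt_n[OF n] Nr_def ebas_def fun_eq_iff)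
    then show "\<exists>(lam :: nat \<Rightarrow> complex) a.
        \<phi> (ebas 1) = (\<lambda>j. \<Sum>k\<in>{1..n}. lam k * ebas k j) \<and>
        (\<forall>i\<in>{2..n-1}. \<phi> (ebas i) = (\<lambda>j. \<Sum>k\<in>{i..n-1}. of_nat i * lam (k - i + 1) * ebas k j)) \<and>
        \<phi> (ebas n) = (\<lambda>j. a * ebas (n-1) j + of_nat (n - 2) * lam 1 * ebas n j)"
      using ph i1 iM R1[where n=n and p=p and t=3] Rmid[where n=n and p=p and t=3] by (intro exI[of _ p] exI[of _ "p (n+1)"]) auto
  qed
  have P4: "\<forall>\<phi>\<in>Der n 4. \<exists>(lam :: nat \<Rightarrow> complex) a.
        \<phi> (ebas 1) = (\<lambda>j. \<Sum>k\<in>{1..n}. lam k * ebas k j) \<and>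
        (\<forall>i\<in>{2..n-1}. \<phi> (ebas i) = (\<lambda>j. \<Sum>k\<in>{i..n-1}. of_nat i * lam (k - i + 1) * ebas k j)) \<and>
        \<phi> (ebas n) = (\<lambda>j. - lam n * ebas (n-2) j + a * ebas (n-1) j
                          + (of_nat n - 1) / 2 * lam 1 * ebas n j)"
  proof
    fix \<phi> assume "\<phi> \<in> Der n 4"
    then obtain p where ph: "\<forall>i\<in>{1..n}. \<phi> (ebas i) = Mt n 4 p i" using phi_rows[OF _ n, of \<phi> 4] by auto
    have "\<phi> (ebas n) = (\<lambda>j. - p n * ebas (n-2) j + p (n+1) * ebas (n-1) j
                          + (of_nat n - 1) / 2 * p 1 * ebas n j)"
      using ph iN nd by (auto simp: Mt_n[OF n] Nr_def ebas_def fun_eq_iff)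
    then show "\<exists>(lam :: nat \<Rightarrow> complex) a.
        \<phi> (ebas 1) = (\<lambda>j. \<Sum>k\<in>{1..n}. lam k * ebas k j) \<and>
        (\<forall>i\<in>{2..n-1}. \<phi> (ebas i) = (\<lambda>j. \<Sum>k\<in>{i..n-1}. of_nat i * lam (k - i + 1) * ebas k j)) \<and>
        \<phi> (ebas n) = (\<lambda>j. - lam n * ebas (n-2) j + a * ebas (n-1) j
                          + (of_nat n - 1) / 2 * lam 1 * ebas n j)"
      using ph i1 iM R1[where n=n and p=p and t=4] Rmid[where n=n and p=p and t=4] by (intro exI[of _ p] exI[of _ "p (n+1)"]) auto
  qed
  have P5: "\<forall>\<phi>\<in>Der n 5. \<exists>(lam :: nat \<Rightarrow> complex) a.
        \<phi> (ebas 1) = (\<lambda>j. \<Sum>k\<in>{2..n}. lam k * ebas k j) \<and>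
        (\<forall>i\<in>{2..n-1}. \<phi> (ebas i) = (\<lambda>j. \<Sum>k\<in>{i+1..n-1}. of_nat i * lam (k - i + 1) * ebas k j)) \<and>
        \<phi> (ebas n) = (\<lambda>j. - lam n * ebas (n-2) j + a * ebas (n-1) j)"
  proof
    fix \<phi> assume "\<phi> \<in> Der n 5"
    then obtain p where ps: "\<forall>m. m \<notin> Sset n 5 \<longrightarrow> p m = 0" and ph: "\<forall>i\<in>{1..n}. \<phi> (ebas i) = Mt n 5 p i"
      using phi_rows[OF _ n, of \<phi> 5] by auto
    have p1: "p 1 = 0" using ps Sset_1[of 5 n] by auto
    have "\<phi> (ebas n) = (\<lambda>j. - p n * ebas (n-2) j + p (n+1) * ebas (n-1) j)"
      using ph iN nd by (auto simp: Mt_n[OF n] Nr_def ebas_def fun_eq_iff)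
    then show "\<exists>(lam :: nat \<Rightarrow> complex) a.
        \<phi> (ebas 1) = (\<lambda>j. \<Sum>k\<in>{2..n}. lam k * ebas k j) \<and>
        (\<forall>i\<in>{2..n-1}. \<phi> (ebas i) = (\<lambda>j. \<Sum>k\<in>{i+1..n-1}. of_nat i * lam (k - i + 1) * ebas k j)) \<and>
        \<phi> (ebas n) = (\<lambda>j. - lam n * ebas (n-2) j + a * ebas (n-1) j)"
      using ph i1 iM R1'[where n=n and p=p and t=5, OF p1] Rmid'[where n=n and p=p, OF _ p1] by (intro exI[of _ p] exI[of _ "p (n+1)"]) auto
  qed
  have D: "dimDer n 1 = n + 2" "dimDer n 2 = n" "dimDer n 3 = n + 1" "dimDer n 4 = n + 1" "dimDer n 5 = n"
    using dimDer_eq[OF n] card_S[OF n] by auto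
  show ?thesis using P1 P2 P3 P4 P5 D by blast
qed

end
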